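(* (1) For every $\gamma\in(0,1]$ there exists $c_*=c_*(\gamma)>0$ such that $\lambda_{n,\gamma}\ge c_*n^{2/(1+\gamma)}$ for all $n\in\mathbb{N}^*$. (2) For every $\gamma>0$ there exists $c^*=c^*(\gamma)>0$ such that $\lambda_{n,\gamma}\le c^*n^{2/(1+\gamma)}$ for all $n\in\mathbb{N}^*$.
   Context: For $n\in\mathbb{N}^*$ and $\gamma>0$, $\lambda_{n,\gamma}$ is the smallest eigenvalue of the operator $A_{n,\gamma}\varphi=-\varphi''+(n\pi)^2|x|^{2\gamma}\varphi$ with domain $H^2(-1,1)\cap H^1_0(-1,1)$, i.e. $\lambda_{n,\gamma}=\min\big\{\int_{-1}^1[v'^2+(n\pi)^2|x|^{2\gamma}v^2]dx/\int_{-1}^1v^2dx:\ v\in H^1_0(-1,1)\setminus\{0\}\big\}$. *)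

theory Defs
  imports "HOL-Analysis.Analysis"
begin

text \<open>H^1_0(-1,1) in one dimension: v (continuous representative) is the primitive
  v(x) = int_{-1}^x g of some g in L^2(-1,1) with int_{-1}^1 g = 0 (so v(-1)=v(1)=0);
  g is then the weak derivative v'.\<close>
definition H10_pair :: "(real \<Rightarrow> real) \<Rightarrow> (real \<Rightarrow> real) \<Rightarrow> bool" where
  "H10_pair v g \<longleftrightarrow>
     g \<in> borel_measurable lborel \<and>
     set_integrable lborel {-1..1} (\<lambda>x. (g x)\<^sup>2) \<and>
     (\<forall>x\<in>{-1..1}. v x = (LINT t:{-1..x}|lborel. g t)) \<and>
     (LINT t:{-1..1}|lborel. g t) = 0"

definition rayleigh :: "nat \<Rightarrow> real \<Rightarrow> (real \<Rightarrow> real) \<Rightarrow> (real \<Rightarrow> real) \<Rightarrow> real" where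
  "rayleigh n \<gamma> v g =
     (LINT x:{-1..1}|lborel. (g x)\<^sup>2 + (real n * pi)\<^sup>2 * \<bar>x\<bar> powr (2 * \<gamma>) * (v x)\<^sup>2)
     / (LINT x:{-1..1}|lborel. (v x)\<^sup>2)"

text \<open>Smallest eigenvalue lambda_{n,gamma}: the minimum (= infimum) of the Rayleigh quotient
  over nonzero v in H^1_0(-1,1).\<close>
definition lambda_ng :: "nat \<Rightarrow> real \<Rightarrow> real" where
  "lambda_ng n \<gamma> = Inf {rayleigh n \<gamma> v g | v g. H10_pair v g \<and> (\<exists>x\<in>{-1..1}. v x \<noteq> 0)}"

end

theory Submission
  imports Defs
begin

lemma cs_hk:
  fixes g :: "real \<Rightarrow> real"
  assumes "a \<le> b" "g integrable_on {a..b}" "(\<lambda>x. (g x)\<^sup>2) integrable_on {a..b}"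
  shows "(integral {a..b} g)\<^sup>2 \<le> (b - a) * integral {a..b} (\<lambda>x. (g x)\<^sup>2)"
proof (cases "a = b")
  case True then show ?thesis by simp
next
  case False
  hence L: "b - a > 0" using assms by simp
  define I where "I = integral {a..b} g"
  define Q where "Q = integral {a..b} (\<lambda>x. (g x)\<^sup>2)"
  define t where "t = I / (b - a)"
  have e: "(\<lambda>x. (g x - t)\<^sup>2) = (\<lambda>x. ((g x)\<^sup>2 - (2*t) * g x) + t\<^sup>2)"
    by (auto simp: power2_eq_square algebra_simps)
  have i1: "(\<lambda>x. (g x)\<^sup>2 - (2*t) * g x) integrable_on {a..b}"
    using assms by (intro integrable_diff integrable_on_mult_right) auto
  have int: "(\<lambda>x. (g x - t)\<^sup>2) integrable_on {a..b}"
    unfolding e by (intro integrable_add i1) auto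
  have "0 \<le> integral {a..b} (\<lambda>x. (g x - t)\<^sup>2)"
    by (rule integral_nonneg[OF int]) simp
  also have "integral {a..b} (\<lambda>x. (g x - t)\<^sup>2) = Q - 2*t*I + t\<^sup>2 * (b - a)"
  proof -
    have "integral {a..b} (\<lambda>x. ((g x)\<^sup>2 - (2*t) * g x) + t\<^sup>2)
       = integral {a..b} (\<lambda>x. (g x)\<^sup>2 - (2*t) * g x) + integral {a..b} (\<lambda>x. t\<^sup>2)"
      by (rule integral_add[OF i1]) auto
    also have "integral {a..b} (\<lambda>x. (g x)\<^sup>2 - (2*t) * g x) = Q - integral {a..b} (\<lambda>x. (2*t) * g x)"
      unfolding Q_def by (rule integral_diff) (use assms in \<open>auto intro: integrable_on_mult_right\<close>)
    also have "integral {a..b} (\<lambda>x. (2*t) * g x) = 2*t*I"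
      unfolding I_def by simp
    finally show ?thesis unfolding e using assms by simp
  qed
  finally have "0 \<le> Q - 2*t*I + t\<^sup>2 * (b - a)" .
  moreover have "t\<^sup>2*(b-a) = I\<^sup>2/(b-a)" "2*t*I = 2*(I\<^sup>2/(b-a))"
  proof -
    have "\<And>L. L > 0 \<Longrightarrow> (I/L)\<^sup>2*L = I\<^sup>2/L \<and> 2*(I/L)*I = 2*(I\<^sup>2/L)"
      by (simp add: power2_eq_square field_simps)
    from this[OF L] show "t\<^sup>2*(b-a) = I\<^sup>2/(b-a)" "2*t*I = 2*(I\<^sup>2/(b-a))"
      by (simp_all add: t_def)
  qed
  ultimately have "0 \<le> Q - I\<^sup>2 / (b - a)" by linarith
  hence "I\<^sup>2 / (b-a) \<le> Q" by simp
  thus ?thesis using L unfolding I_def[symmetric] Q_def[symmetric]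
    by (simp add: field_simps)
qed

lemma set_integrable_const_Icc:
  "set_integrable lborel {a..b::real} (\<lambda>x. c::real)"
  unfolding set_integrable_def
  by (rule borel_integrable_compact) (auto intro: continuous_intros)

lemma set_integrable_add:
  fixes f h :: "real \<Rightarrow> real"
  assumes "set_integrable M A f" "set_integrable M A h"
  shows "set_integrable M A (\<lambda>x. f x + h x)"
  using Bochner_Integration.integrable_add[OF assms[unfolded set_integrable_def]] unfolding set_integrable_def
  by (simp add: distrib_left)

lemma H10_facts:
  assumes H: "H10_pair v g"
  shows "g integrable_on {-1..1}" "(\<lambda>x. (g x)\<^sup>2) integrable_on {-1..1}"
    "\<And>x. x \<in> {-1..1} \<Longrightarrow> v x = integral {-1..x} g"
    "(LINT x:{-1..1}|lborel. (g x)\<^sup>2) = integral {-1..1} (\<lambda>x. (g x)\<^sup>2)"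
    "integral {-1..1} (\<lambda>x. (g x)\<^sup>2) \<ge> 0"
    "continuous_on {-1..1} v"
    "v (-1) = 0"
    "\<And>a b. -1 \<le> a \<Longrightarrow> a \<le> b \<Longrightarrow> b \<le> 1 \<Longrightarrow>
        (v b - v a)\<^sup>2 \<le> (b - a) * integral {-1..1} (\<lambda>x. (g x)\<^sup>2)"
proof -
  have gm: "g \<in> borel_measurable lborel" and g2: "set_integrable lborel {-1..1} (\<lambda>x. (g x)\<^sup>2)"
    and vdef: "\<forall>x\<in>{-1..1}. v x = (LINT t:{-1..x}|lborel. g t)"
    using H unfolding H10_pair_def by auto
  have g1: "set_integrable lborel {-1..1} g"
  proof (rule set_integrable_bound)
    show "set_integrable lborel {-1..1} (\<lambda>x. 1 + (g x)\<^sup>2)"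
      by (rule set_integrable_add[OF set_integrable_const_Icc g2])
    show "set_borel_measurable lborel {-1..1} g"
      unfolding set_borel_measurable_def using gm by measurable
    have "\<And>y::real. \<bar>y\<bar> \<le> 1 + y\<^sup>2"
    proof -
      fix y :: real
      show "\<bar>y\<bar> \<le> 1 + y\<^sup>2"
      proof (cases "\<bar>y\<bar> \<le> 1")
        case True then show ?thesis by (simp add: add_increasing2)
      next
        case False
        hence "\<bar>y\<bar> * 1 \<le> \<bar>y\<bar> * \<bar>y\<bar>" by (intro mult_left_mono) auto
        then show ?thesis by (simp add: power2_eq_square)
      qed
    qed
    then show "AE x in lborel. x \<in> {-1..1} \<longrightarrow> norm (g x) \<le> norm (1 + (g x)\<^sup>2)"
      by (auto intro!: AE_I2)
  qed
  show gi: "g integrable_on {-1..1}" using set_borel_integral_eq_integral(1)[OF g1] .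
  show g2i: "(\<lambda>x. (g x)\<^sup>2) integrable_on {-1..1}" using set_borel_integral_eq_integral(1)[OF g2] .
  show "(LINT x:{-1..1}|lborel. (g x)\<^sup>2) = integral {-1..1} (\<lambda>x. (g x)\<^sup>2)"
    using set_borel_integral_eq_integral(2)[OF g2] .
  show A0: "integral {-1..1} (\<lambda>x. (g x)\<^sup>2) \<ge> 0"
    by (rule integral_nonneg[OF g2i]) simp
  show vi: "\<And>x. x \<in> {-1..1} \<Longrightarrow> v x = integral {-1..x} g"
  proof -
    fix x :: real assume x: "x \<in> {-1..1}"
    have "set_integrable lborel {-1..x} g"
      by (rule set_integrable_subset[OF g1]) (use x in auto)
    then show "v x = integral {-1..x} g" using vdef x set_borel_integral_eq_integral(2) by metis
  qed
  show "continuous_on {-1..1} v"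
    using indefinite_integral_continuous_1[OF gi] by (rule continuous_on_eq) (use vi in auto)
  show "v (-1) = 0" using vi[of "-1"] by simp
  fix a b :: real assume ab: "-1 \<le> a" "a \<le> b" "b \<le> 1"
  have gab: "g integrable_on {a..b}" by (rule integrable_on_subinterval[OF gi]) (use ab in auto)
  have g2ab: "(\<lambda>x. (g x)\<^sup>2) integrable_on {a..b}" by (rule integrable_on_subinterval[OF g2i]) (use ab in auto)
  have "integral {-1..a} g + integral {a..b} g = integral {-1..b} g"
    by (rule Henstock_Kurzweil_Integration.integral_combine) (use ab in \<open>auto intro: integrable_on_subinterval[OF gi]\<close>)
  hence "v b - v a = integral {a..b} g" using vi[of a] vi[of b] ab by auto
  hence "(v b - v a)\<^sup>2 \<le> (b - a) * integral {a..b} (\<lambda>x. (g x)\<^sup>2)"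
    using cs_hk[OF ab(2) gab g2ab] by simp
  also have "\<dots> \<le> (b - a) * integral {-1..1} (\<lambda>x. (g x)\<^sup>2)"
    by (rule mult_left_mono, rule integral_subset_le) (use ab g2ab g2i in auto)
  finally show "(v b - v a)\<^sup>2 \<le> (b - a) * integral {-1..1} (\<lambda>x. (g x)\<^sup>2)" .
qed

definition tv :: "real \<Rightarrow> real \<Rightarrow> real" where
  "tv e x = max 0 (1 - \<bar>x\<bar> / e)"
definition tg :: "real \<Rightarrow> real \<Rightarrow> real" where
  "tg e x = (indicator {-e<..<0} x - indicator {0<..<e} x) / e"

lemma tv_deriv:
  assumes e: "e > 0" and x: "x \<notin> {-e, 0, e}"
  shows "(tv e has_real_derivative tg e x) (at x)"
proof -
  consider "x < -e" | "-e < x \<and> x < 0" | "0 < x \<and> x < e" | "e < x" using x by force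
  then show ?thesis
  proof cases
    case 1
    have tgx: "tg e x = 0" using 1 e by (auto simp: tg_def)
    have "((\<lambda>_. 0) has_real_derivative tg e x) (at x)" unfolding tgx by (rule DERIV_const)
    then show ?thesis
      by (rule has_field_derivative_transform_within_open[where S="{..<-e}"])
         (use 1 e in \<open>auto simp: tv_def tg_def field_simps\<close>)
  next
    case 2
    have tgx: "tg e x = 1 / e" using 2 e by (auto simp: tg_def)
    have "((\<lambda>y. 1 + y / e) has_real_derivative tg e x) (at x)" unfolding tgx
      using e by (auto intro!: derivative_eq_intros)
    then show ?thesis
      by (rule has_field_derivative_transform_within_open[where S="{-e<..<0}"])
         (use 2 e in \<open>auto simp: tv_def tg_def field_simps\<close>)
  next
    case 3
    have tgx: "tg e x = - 1 / e" using 3 e by (auto simp: tg_def)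
    have "((\<lambda>y. 1 - y / e) has_real_derivative tg e x) (at x)" unfolding tgx
      using e by (auto intro!: derivative_eq_intros)
    then show ?thesis
      by (rule has_field_derivative_transform_within_open[where S="{0<..<e}"])
         (use 3 e in \<open>auto simp: tv_def tg_def field_simps\<close>)
  next
    case 4
    have tgx: "tg e x = 0" using 4 e by (auto simp: tg_def)
    have "((\<lambda>_. 0) has_real_derivative tg e x) (at x)" unfolding tgx by (rule DERIV_const)
    then show ?thesis
      by (rule has_field_derivative_transform_within_open[where S="{e<..}"])
         (use 4 e in \<open>auto simp: tv_def tg_def field_simps\<close>)
  qed
qed

lemma tv_cont: "e \<noteq> 0 \<Longrightarrow> continuous_on S (tv e)"
  unfolding tv_def by (intro continuous_intros) auto

lemma tg_meas: "tg e \<in> borel_measurable lborel"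
  unfolding tg_def by measurable

lemma tg_bound: "e > 0 \<Longrightarrow> \<bar>tg e x\<bar> \<le> 1 / e"
  by (auto simp: tg_def indicator_def)

lemma tent_H10:
  assumes e: "0 < e" "e \<le> 1"
  shows "H10_pair (tv e) (tg e)"
proof -
  have si: "set_integrable lborel {-1..b} (tg e)" for b
  proof (rule set_integrable_bound[OF set_integrable_const_Icc[of "-1" b "1/e"]])
    show "set_borel_measurable lborel {-1..b} (tg e)"
      unfolding set_borel_measurable_def using tg_meas by measurable
    show "AE x in lborel. x \<in> {-1..b} \<longrightarrow> norm (tg e x) \<le> norm (1 / e)"
      using tg_bound[OF e(1)] e by (auto intro!: AE_I2)
  qed
  have hi: "(tg e has_integral tv e b) {-1..b}" if b: "b \<in> {-1..1}" for b
  proof -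
    have "(tg e has_integral tv e b - tv e (-1)) {-1..b}"
      by (rule fundamental_theorem_of_calculus_interior_strong[where S="{-e,0,e}"])
         (use b e in \<open>auto simp: tv_cont has_real_derivative_iff_has_vector_derivative[symmetric]
                 intro!: tv_deriv\<close>)
    moreover have "tv e (-1) = 0" using e by (auto simp: tv_def)
    ultimately show ?thesis by simp
  qed
  have L: "(LINT t:{-1..b}|lborel. tg e t) = tv e b" if b: "b \<in> {-1..1}" for b
    using set_borel_integral_eq_integral(2)[OF si[of b]] hi[OF b] integral_unique by metis
  have sq: "set_integrable lborel {-1..1} (\<lambda>x. (tg e x)\<^sup>2)"
  proof (rule set_integrable_bound[OF set_integrable_const_Icc[of "-1" 1 "1/e\<^sup>2"]])
    show "set_borel_measurable lborel {-1..1} (\<lambda>x. (tg e x)\<^sup>2)"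
      unfolding set_borel_measurable_def using tg_meas by measurable
    have "(tg e x)\<^sup>2 \<le> (1/e)\<^sup>2" for x
      using tg_bound[OF e(1), of x] by (metis abs_ge_zero power2_abs power_mono)
    then show "AE x in lborel. x \<in> {-1..1} \<longrightarrow> norm ((tg e x)\<^sup>2) \<le> norm (1 / e\<^sup>2)"
      by (auto intro!: AE_I2 simp: power_divide)
  qed
  have "tv e 1 = 0" using e by (auto simp: tv_def)
  then show ?thesis
    unfolding H10_pair_def using tg_meas sq L[of 1] L by auto
qed

lemma set_integrable_cont:
  fixes f :: "real \<Rightarrow> real"
  assumes "continuous_on {a..b} f"
  shows "set_integrable lborel {a..b} f"
  unfolding set_integrable_def by (rule borel_integrable_compact) (use assms in auto)

lemma tv_meas: "tv e \<in> borel_measurable borel"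
  unfolding tv_def by measurable

lemma tv_range: "e > 0 \<Longrightarrow> 0 \<le> tv e x \<and> tv e x \<le> 1"
  by (auto simp: tv_def)

lemma abs_powr_le1: "\<bar>x::real\<bar> \<le> 1 \<Longrightarrow> p > 0 \<Longrightarrow> \<bar>x\<bar> powr p \<le> 1"
  using powr_mono2[of p "\<bar>x\<bar>" 1] by simp

lemma tent_rayleigh:
  assumes e: "0 < e" "e \<le> 1" and ga: "\<gamma> > 0"
  shows "rayleigh n \<gamma> (tv e) (tg e) \<le> 8 / e\<^sup>2 + 8 * (real n * pi)\<^sup>2 * e powr (2 * \<gamma>)"
proof -
  define K where "K = (real n * pi)\<^sup>2"
  have K0: "K \<ge> 0" by (simp add: K_def)
  define f where "f x = (tg e x)\<^sup>2 + K * \<bar>x\<bar> powr (2 * \<gamma>) * (tv e x)\<^sup>2" for x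
  define C where "C = 1 / e\<^sup>2 + K * e powr (2 * \<gamma>)"
  have tg2: "(tg e x)\<^sup>2 \<le> 1 / e\<^sup>2" for x
    using tg_bound[OF e(1), of x] by (metis abs_ge_zero power2_abs power_mono power_one_over)
  have tv2: "(tv e x)\<^sup>2 \<le> 1" for x
    using tv_range[OF e(1), of x] by (simp add: power_le_one)
  have f0: "f x \<ge> 0" for x unfolding f_def using K0 by simp
  have fi: "set_integrable lborel {-1..1} f"
  proof (rule set_integrable_bound[OF set_integrable_const_Icc[of "-1" 1 "1/e\<^sup>2 + K"]])
    show "set_borel_measurable lborel {-1..1} f"
      unfolding set_borel_measurable_def f_def using tg_meas tv_meas by measurable
    have "f x \<le> 1/e\<^sup>2 + K" if x: "x \<in> {-1..1}" for x
    proof -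
      have "\<bar>x\<bar> powr (2 * \<gamma>) * (tv e x)\<^sup>2 \<le> 1 * 1"
        by (rule mult_mono) (use x ga tv2 abs_powr_le1[of x "2*\<gamma>"] in auto)
      hence "K * (\<bar>x\<bar> powr (2 * \<gamma>) * (tv e x)\<^sup>2) \<le> K * 1" using K0 by (intro mult_left_mono) simp_all
      then show ?thesis using tg2[of x] unfolding f_def by (simp add: mult.assoc)
    qed
    then show "AE x in lborel. x \<in> {-1..1} \<longrightarrow> norm (f x) \<le> norm (1/e\<^sup>2 + K)"
      using f0 K0 by (auto intro!: AE_I2)
  qed
  have fI: "f integrable_on {-1..1}" using set_borel_integral_eq_integral(1)[OF fi] .
  have Nf: "(LINT x:{-1..1}|lborel. (tg e x)\<^sup>2 + (real n * pi)\<^sup>2 * \<bar>x\<bar> powr (2 * \<gamma>) * (tv e x)\<^sup>2)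
      = integral {-1..1} f"
    using set_borel_integral_eq_integral(2)[OF fi] unfolding f_def K_def .
  have fz: "f x = 0" if "x \<le> -e \<or> e \<le> x" for x
    using that e unfolding f_def by (auto simp: tg_def tv_def field_simps)
  have "integral {-1..-e} f + integral {-e..1} f = integral {-1..1} f"
    by (rule Henstock_Kurzweil_Integration.integral_combine) (use e fI in auto)
  moreover have "integral {-e..e} f + integral {e..1} f = integral {-e..1} f"
    by (rule Henstock_Kurzweil_Integration.integral_combine)
       (use e fI in \<open>auto intro: integrable_on_subinterval\<close>)
  moreover have "integral {-1..-e} f = 0"
    using integral_cong[of "{-1..-e}" f "\<lambda>_. 0"] fz by simp
  moreover have "integral {e..1} f = 0"
    using integral_cong[of "{e..1}" f "\<lambda>_. 0"] fz by simp
  moreover have "integral {-e..e} f \<le> integral {-e..e} (\<lambda>_. C)"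
  proof (rule integral_le)
    show "f integrable_on {-e..e}" by (rule integrable_on_subinterval[OF fI]) (use e in auto)
    show "(\<lambda>_. C) integrable_on {-e..e}" by (rule integrable_const_ivl)
    fix x assume x: "x \<in> {-e..e}"
    have "\<bar>x\<bar> powr (2 * \<gamma>) * (tv e x)\<^sup>2 \<le> e powr (2 * \<gamma>) * 1"
      by (rule mult_mono) (use x ga tv2 e in \<open>auto intro!: powr_mono2\<close>)
    hence "K * (\<bar>x\<bar> powr (2 * \<gamma>) * (tv e x)\<^sup>2) \<le> K * (e powr (2 * \<gamma>))"
      by (intro mult_left_mono K0) simp
    then show "f x \<le> C" using tg2[of x] unfolding f_def C_def by (simp add: mult.assoc)
  qed
  moreover have "integral {-e..e} (\<lambda>_. C) = 2 * e * C" using e by simp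
  ultimately have N: "integral {-1..1} f \<le> 2 * e * C" by linarith
  have N0: "integral {-1..1} f \<ge> 0" by (rule integral_nonneg[OF fI]) (use f0 in auto)
  have vc: "continuous_on {-1..1} (\<lambda>x. (tv e x)\<^sup>2)"
    by (intro continuous_intros tv_cont) (use e in auto)
  have vi: "set_integrable lborel {-1..1} (\<lambda>x. (tv e x)\<^sup>2)" by (rule set_integrable_cont[OF vc])
  have vI: "(\<lambda>x. (tv e x)\<^sup>2) integrable_on {-1..1}" using set_borel_integral_eq_integral(1)[OF vi] .
  have Dv: "(LINT x:{-1..1}|lborel. (tv e x)\<^sup>2) = integral {-1..1} (\<lambda>x. (tv e x)\<^sup>2)"
    using set_borel_integral_eq_integral(2)[OF vi] .
  have "integral {-e/2..e/2} (\<lambda>_. 1/4) \<le> integral {-e/2..e/2} (\<lambda>x. (tv e x)\<^sup>2)"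
  proof (rule integral_le)
    show "(\<lambda>x. (tv e x)\<^sup>2) integrable_on {-e/2..e/2}"
      by (rule integrable_on_subinterval[OF vI]) (use e in auto)
    fix x assume x: "x \<in> {-e/2..e/2}"
    hence "tv e x \<ge> 1/2" using e by (auto simp: tv_def field_simps)
    hence "(1/2)\<^sup>2 \<le> (tv e x)\<^sup>2" by (intro power_mono) auto
    then show "1/4 \<le> (tv e x)\<^sup>2" by (simp add: power2_eq_square)
  qed (rule integrable_const_ivl)
  also have "\<dots> \<le> integral {-1..1} (\<lambda>x. (tv e x)\<^sup>2)"
    by (rule integral_subset_le) (use e vI in \<open>auto intro: integrable_on_subinterval\<close>)
  finally have D: "e / 4 \<le> integral {-1..1} (\<lambda>x. (tv e x)\<^sup>2)" using e by simp
  have "rayleigh n \<gamma> (tv e) (tg e) = integral {-1..1} f / integral {-1..1} (\<lambda>x. (tv e x)\<^sup>2)"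
    unfolding rayleigh_def Nf Dv ..
  also have "\<dots> \<le> integral {-1..1} f / (e / 4)"
    by (rule divide_left_mono[OF D N0]) (use e D in auto)
  also have "\<dots> \<le> (2 * e * C) / (e / 4)"
    by (rule divide_right_mono[OF N]) (use e in auto)
  also have "\<dots> = 8 * C" using e by (simp add: field_simps)
  finally show ?thesis unfolding C_def K_def by (simp add: algebra_simps)
qed

lemma eps_facts:
  fixes n :: nat and \<gamma> :: real
  assumes n: "n \<ge> 1" and ga: "\<gamma> > 0"
  defines "e \<equiv> real n powr (-1/(1+\<gamma>))" and "P \<equiv> real n powr (2/(1+\<gamma>))"
  shows "e > 0" "e \<le> 1" "P > 0" "P * e\<^sup>2 = 1" "(real n * pi)\<^sup>2 * e powr (2*\<gamma>) = pi\<^sup>2 * P"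
proof -
  have n0: "real n > 0" using n by simp
  show "e > 0" unfolding e_def using n0 by simp
  show "P > 0" unfolding P_def using n0 by simp
  have "real n powr (-1/(1+\<gamma>)) \<le> real n powr 0"
    by (rule powr_mono) (use n ga in \<open>auto simp: field_simps\<close>)
  then show "e \<le> 1" unfolding e_def using n0 by simp
  have "P * e\<^sup>2 = real n powr (2/(1+\<gamma>) + (-1/(1+\<gamma>)) + (-1/(1+\<gamma>)))"
    unfolding P_def e_def power2_eq_square by (simp only: powr_add mult.assoc)
  also have "2/(1+\<gamma>) + (-1/(1+\<gamma>)) + (-1/(1+\<gamma>)) = 0" using ga by (simp add: field_simps)
  finally show "P * e\<^sup>2 = 1" using n0 by simp
  have E1: "e powr (2*\<gamma>) = real n powr (-1/(1+\<gamma>) * (2*\<gamma>))" unfolding e_def by (simp add: powr_powr)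
  have E2: "(real n)\<^sup>2 = real n powr 2" using n0 by (simp add: powr_numeral)
  have "(real n)\<^sup>2 * e powr (2*\<gamma>) = real n powr 2 * real n powr (-1/(1+\<gamma>) * (2*\<gamma>))"
    by (simp only: E1 E2)
  also have "\<dots> = real n powr (2 + -1/(1+\<gamma>) * (2*\<gamma>))"
    by (simp only: powr_add)
  also have "2 + -1/(1+\<gamma>) * (2*\<gamma>) = 2/(1+\<gamma>)" using ga by (simp add: field_simps)
  finally show "(real n * pi)\<^sup>2 * e powr (2*\<gamma>) = pi\<^sup>2 * P"
    unfolding P_def by (simp add: power_mult_distrib algebra_simps)
qed

lemma sq_split: "(a::real)\<^sup>2 \<le> 2 * b\<^sup>2 + 2 * (b - a)\<^sup>2"
proof -
  have "0 \<le> (2 * b - a)\<^sup>2" by simp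
  then show ?thesis by (simp add: power2_eq_square algebra_simps)
qed

lemma lower_main:
  fixes n :: nat
  assumes H: "H10_pair v g" and x0: "x0 \<in> {-1..1}" "v x0 \<noteq> 0"
    and ga: "\<gamma> > 0" and n: "n \<ge> 1"
  shows "real n powr (2/(1+\<gamma>)) / 16 \<le> rayleigh n \<gamma> v g"
proof -
  define e where "e = real n powr (-1/(1+\<gamma>))"
  define P where "P = real n powr (2/(1+\<gamma>))"
  note EF = eps_facts[OF n ga, folded e_def P_def]
  define K where "K = (real n * pi)\<^sup>2"
  have K0: "K \<ge> 0" by (simp add: K_def)
  note HF = H10_facts[OF H]
  define A where "A = integral {-1..1} (\<lambda>x. (g x)\<^sup>2)"
  have A0: "A \<ge> 0" using HF(5) by (simp add: A_def)
  have hold: "(v b - v a)\<^sup>2 \<le> (b - a) * A" if "-1 \<le> a" "a \<le> b" "b \<le> 1" for a b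
    using HF(8)[OF that] by (simp add: A_def)
  define w where "w x = K * \<bar>x\<bar> powr (2*\<gamma>) * (v x)\<^sup>2" for x
  have w0: "w x \<ge> 0" for x unfolding w_def using K0 by simp
  have vc: "continuous_on {-1..1} v" by (rule HF(6))
  have wc: "continuous_on {-1..1} w"
    unfolding w_def
    by (intro continuous_intros continuous_on_powr' vc) (use ga in auto)
  have wi: "set_integrable lborel {-1..1} w" by (rule set_integrable_cont[OF wc])
  have wI: "w integrable_on {-1..1}" using set_borel_integral_eq_integral(1)[OF wi] .
  define W where "W = integral {-1..1} w"
  have g2: "set_integrable lborel {-1..1} (\<lambda>x. (g x)\<^sup>2)" using H unfolding H10_pair_def by auto
  have fi: "set_integrable lborel {-1..1} (\<lambda>x. (g x)\<^sup>2 + w x)" by (rule set_integrable_add[OF g2 wi])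
  have "(LINT x:{-1..1}|lborel. (g x)\<^sup>2 + (real n * pi)\<^sup>2 * \<bar>x\<bar> powr (2 * \<gamma>) * (v x)\<^sup>2)
        = integral {-1..1} (\<lambda>x. (g x)\<^sup>2 + w x)"
    using set_borel_integral_eq_integral(2)[OF fi] unfolding w_def K_def .
  also have "\<dots> = A + W" unfolding A_def W_def by (rule integral_add[OF HF(2) wI])
  finally have Neq: "(LINT x:{-1..1}|lborel. (g x)\<^sup>2 + (real n * pi)\<^sup>2 * \<bar>x\<bar> powr (2 * \<gamma>) * (v x)\<^sup>2) = A + W" .
  have v2c: "continuous_on {-1..1} (\<lambda>x. (v x)\<^sup>2)" by (intro continuous_intros vc)
  have v2i: "set_integrable lborel {-1..1} (\<lambda>x. (v x)\<^sup>2)" by (rule set_integrable_cont[OF v2c])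
  have v2I: "(\<lambda>x. (v x)\<^sup>2) integrable_on {-1..1}" using set_borel_integral_eq_integral(1)[OF v2i] .
  define D where "D = integral {-1..1} (\<lambda>x. (v x)\<^sup>2)"
  have Deq: "(LINT x:{-1..1}|lborel. (v x)\<^sup>2) = D"
    using set_borel_integral_eq_integral(2)[OF v2i] unfolding D_def .
  have W0: "W \<ge> 0" unfolding W_def by (rule integral_nonneg[OF wI]) (use w0 in auto)
  have D0: "D \<ge> 0" unfolding D_def by (rule integral_nonneg[OF v2I]) auto
  have "D \<noteq> 0"
  proof
    assume "D = 0"
    hence "\<forall>x\<in>{-1..1}. (v x)\<^sup>2 = 0" unfolding D_def
      using integral_eq_0_iff[OF v2c, of] by simp
    thus False using x0 by auto
  qed
  with D0 have Dpos: "D > 0" by simp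
  have key: "P * D \<le> 16 * (A + W)"
  proof (cases "2 * e \<le> 1")
    case False
    hence "e\<^sup>2 > (1/2)\<^sup>2" using EF(1) by (intro power_strict_mono) auto
    hence "P * (1/4) < P * e\<^sup>2" using EF(3) by (simp add: power2_eq_square)
    hence P4: "P < 4" using EF(4) by simp
    have "D \<le> integral {-1..1} (\<lambda>_::real. 2 * A)"
      unfolding D_def
    proof (rule integral_le)
      show "(\<lambda>x. (v x)\<^sup>2) integrable_on {-1..1}" by (rule v2I)
      show "(\<lambda>_::real. 2 * A) integrable_on {-1..1}" by (rule integrable_const_ivl)
      fix x :: real assume x: "x \<in> {-1..1}"
      have "(v x - v (-1))\<^sup>2 \<le> (x - -1) * A" by (rule hold) (use x in auto)
      also have "\<dots> \<le> 2 * A" by (rule mult_right_mono) (use x A0 in auto)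
      finally show "(v x)\<^sup>2 \<le> 2 * A" using HF(7) by simp
    qed
    also have "\<dots> = 4 * A" by simp
    finally have "D \<le> 4 * A" .
    have "P * D \<le> 4 * D" using P4 D0 by (intro mult_right_mono) auto
    moreover have "16 * (A + W) = 16 * A + 16 * W" by simp
    ultimately show ?thesis using \<open>D \<le> 4 * A\<close> W0 by linarith
  next
    case True
    note e0 = EF(1) and e1 = EF(2)
    define c where "c = pi\<^sup>2 * P"
    have cpos: "c > 0" unfolding c_def using EF(3) by simp
    have wge: "c * (v x)\<^sup>2 \<le> w x" if "e \<le> \<bar>x\<bar>" for x
    proof -
      have "K * e powr (2*\<gamma>) \<le> K * \<bar>x\<bar> powr (2*\<gamma>)"
        by (intro mult_left_mono powr_mono2 K0) (use that ga e0 in auto)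
      hence "c \<le> K * \<bar>x\<bar> powr (2*\<gamma>)" using EF(5) unfolding c_def K_def by simp
      then show ?thesis unfolding w_def by (intro mult_right_mono) auto
    qed
    have sub: "f integrable_on {a..b}" if "f integrable_on {-1..1}" "-1 \<le> a" "b \<le> 1" for f :: "real \<Rightarrow> real" and a b
      by (rule integrable_on_subinterval[OF that(1)]) (use that in auto)
    define D1 D2 D3 where "D1 = integral {-1..-e} (\<lambda>x. (v x)\<^sup>2)"
      and "D2 = integral {-e..e} (\<lambda>x. (v x)\<^sup>2)" and "D3 = integral {e..1} (\<lambda>x. (v x)\<^sup>2)"
    define W1 W2 W3 where "W1 = integral {-1..-e} w"
      and "W2 = integral {-e..e} w" and "W3 = integral {e..1} w"
    have "integral {-1..-e} (\<lambda>x. (v x)\<^sup>2) + integral {-e..1} (\<lambda>x. (v x)\<^sup>2) = D"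
      unfolding D_def by (rule Henstock_Kurzweil_Integration.integral_combine) (use e1 e0 v2I in auto)
    moreover have "integral {-e..e} (\<lambda>x. (v x)\<^sup>2) + integral {e..1} (\<lambda>x. (v x)\<^sup>2) = integral {-e..1} (\<lambda>x. (v x)\<^sup>2)"
      by (rule Henstock_Kurzweil_Integration.integral_combine) (use e1 e0 v2I sub in auto)
    ultimately have Dsum: "D = D1 + D2 + D3" unfolding D1_def D2_def D3_def by simp
    have "integral {-1..-e} w + integral {-e..1} w = W"
      unfolding W_def by (rule Henstock_Kurzweil_Integration.integral_combine) (use e1 e0 wI in auto)
    moreover have "integral {-e..e} w + integral {e..1} w = integral {-e..1} w"
      by (rule Henstock_Kurzweil_Integration.integral_combine) (use e1 e0 wI sub in auto)
    ultimately have Wsum: "W = W1 + W2 + W3" unfolding W1_def W2_def W3_def by simp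
    have W20: "W2 \<ge> 0" unfolding W2_def by (rule integral_nonneg) (use e1 e0 wI sub w0 in auto)
    have W10: "W1 \<ge> 0" unfolding W1_def by (rule integral_nonneg) (use e1 e0 wI sub w0 in auto)
    have D1b: "c * D1 \<le> W1"
    proof -
      have i1: "(\<lambda>x. (v x)\<^sup>2) integrable_on {-1..-e}" by (rule sub[OF v2I]) (use e0 e1 in auto)
      have i2: "w integrable_on {-1..-e}" by (rule sub[OF wI]) (use e0 e1 in auto)
      have "integral {-1..-e} (\<lambda>x. c * (v x)\<^sup>2) \<le> W1"
        unfolding W1_def by (rule integral_le) (use e1 e0 i1 i2 wge in \<open>auto intro: integrable_on_mult_right\<close>)
      thus ?thesis unfolding D1_def by simp
    qed
    have D3b: "c * D3 \<le> W3"
    proof -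
      have i1: "(\<lambda>x. (v x)\<^sup>2) integrable_on {e..1}" by (rule sub[OF v2I]) (use e0 e1 in auto)
      have i2: "w integrable_on {e..1}" by (rule sub[OF wI]) (use e0 e1 in auto)
      have "integral {e..1} (\<lambda>x. c * (v x)\<^sup>2) \<le> W3"
        unfolding W3_def by (rule integral_le) (use e1 e0 i1 i2 wge in \<open>auto intro: integrable_on_mult_right\<close>)
      thus ?thesis unfolding D3_def by simp
    qed
    obtain y where y: "y \<in> {e..2*e}" and ymin: "\<And>z. z \<in> {e..2*e} \<Longrightarrow> (v y)\<^sup>2 \<le> (v z)\<^sup>2"
      using continuous_attains_inf[of "{e..2*e}" "\<lambda>x. (v x)\<^sup>2"]
        continuous_on_subset[OF v2c, of "{e..2*e}"] True e0 by auto
    have "integral {e..2*e} (\<lambda>_. (v y)\<^sup>2) \<le> integral {e..2*e} (\<lambda>x. (v x)\<^sup>2)"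
      by (rule integral_le) (use True e0 v2I sub ymin in auto)
    also have "\<dots> \<le> D3" unfolding D3_def
      by (rule integral_subset_le) (use True e0 v2I sub in auto)
    finally have yb: "e * (v y)\<^sup>2 \<le> D3" using e0 by simp
    have "D2 \<le> integral {-e..e} (\<lambda>_. 2 * (v y)\<^sup>2 + 6 * e * A)"
      unfolding D2_def
    proof (rule integral_le)
      show "(\<lambda>_. 2 * (v y)\<^sup>2 + 6 * e * A) integrable_on {-e..e}" by (rule integrable_const_ivl)
      show "(\<lambda>x. (v x)\<^sup>2) integrable_on {-e..e}" by (rule sub[OF v2I]) (use e1 in auto)
      fix x assume x: "x \<in> {-e..e}"
      have "(v y - v x)\<^sup>2 \<le> (y - x) * A" by (rule hold) (use x y True in auto)
      also have "\<dots> \<le> (3 * e) * A" by (rule mult_right_mono) (use x y A0 in auto)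
      finally show "(v x)\<^sup>2 \<le> 2 * (v y)\<^sup>2 + 6 * e * A"
        using sq_split[of "v x" "v y"] by simp
    qed
    also have "\<dots> = 2 * e * (2 * (v y)\<^sup>2 + 6 * e * A)" using e0 by simp
    also have "\<dots> = 4 * (e * (v y)\<^sup>2) + 12 * e\<^sup>2 * A" by (simp add: algebra_simps power2_eq_square)
    finally have D2b: "D2 \<le> 4 * D3 + 12 * e\<^sup>2 * A" using yb by linarith
    have "c * D \<le> c * (D1 + 5 * D3 + 12 * e\<^sup>2 * A)"
      unfolding Dsum using D2b cpos by (intro mult_left_mono) auto
    also have "\<dots> = c * D1 + 5 * (c * D3) + 12 * pi\<^sup>2 * (P * e\<^sup>2) * A"
      unfolding c_def by (simp add: algebra_simps)
    also have "\<dots> \<le> W1 + 5 * W3 + 12 * pi\<^sup>2 * A" using D1b D3b EF(4) by simp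
    also have "\<dots> \<le> 5 * W + 12 * pi\<^sup>2 * A" using Wsum W10 W20 by simp
    finally have cD: "pi\<^sup>2 * (P * D) \<le> 5 * W + 12 * pi\<^sup>2 * A" unfolding c_def by (simp add: mult.assoc)
    have pi1: "pi\<^sup>2 \<ge> 1" using pi_gt3 by (simp add: one_le_power)
    have "pi\<^sup>2 * (P * D) \<le> pi\<^sup>2 * (16 * (A + W))"
    proof -
      have a1: "1 * (16 * W) \<le> pi\<^sup>2 * (16 * W)" by (rule mult_right_mono[OF pi1]) (use W0 in simp)
      have a2: "0 \<le> pi\<^sup>2 * (4 * A)" using A0 by simp
      have a3: "pi\<^sup>2 * (4 * A + 16 * W) = pi\<^sup>2 * (4 * A) + pi\<^sup>2 * (16 * W)" by (simp add: distrib_left)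
      have "5 * W \<le> pi\<^sup>2 * (4 * A + 16 * W)" using a1 a2 a3 W0 by linarith
      thus ?thesis using cD by (simp add: algebra_simps)
    qed
    then show ?thesis using pi1 by simp
  qed
  have "rayleigh n \<gamma> v g = (A + W) / D" unfolding rayleigh_def Neq Deq ..
  moreover have "P / 16 \<le> (A + W) / D" using key Dpos by (simp add: field_simps)
  ultimately show ?thesis unfolding P_def by simp
qed

lemma rayleigh_nonneg: "rayleigh n \<gamma> v g \<ge> 0"
  unfolding rayleigh_def set_lebesgue_integral_def
  by (intro divide_nonneg_nonneg Bochner_Integration.integral_nonneg) auto

lemma S_nonempty:
  "{rayleigh n \<gamma> v g | v g. H10_pair v g \<and> (\<exists>x\<in>{-1..1}. v x \<noteq> 0)} \<noteq> {}"
proof -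
  have "H10_pair (tv 1) (tg 1)" by (rule tent_H10) auto
  moreover have "tv 1 0 \<noteq> 0" by (simp add: tv_def)
  ultimately show ?thesis by force
qed

theorem proposition2p3:
  shows "(\<forall>\<gamma>::real. 0 < \<gamma> \<and> \<gamma> \<le> 1 \<longrightarrow>
            (\<exists>c>0. \<forall>n::nat. n \<ge> 1 \<longrightarrow> lambda_ng n \<gamma> \<ge> c * real n powr (2 / (1 + \<gamma>))))
       \<and> (\<forall>\<gamma>::real. 0 < \<gamma> \<longrightarrow>
            (\<exists>c>0. \<forall>n::nat. n \<ge> 1 \<longrightarrow> lambda_ng n \<gamma> \<le> c * real n powr (2 / (1 + \<gamma>))))"
proof (intro conjI allI impI)
  fix \<gamma> :: real assume ga: "0 < \<gamma> \<and> \<gamma> \<le> 1"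
  show "\<exists>c>0. \<forall>n::nat. n \<ge> 1 \<longrightarrow> lambda_ng n \<gamma> \<ge> c * real n powr (2 / (1 + \<gamma>))"
  proof (intro exI[of _ "1/16"] conjI allI impI)
    fix n :: nat assume n: "n \<ge> 1"
    show "1/16 * real n powr (2 / (1 + \<gamma>)) \<le> lambda_ng n \<gamma>"
      unfolding lambda_ng_def
    proof (rule cInf_greatest[OF S_nonempty])
      fix r assume "r \<in> {rayleigh n \<gamma> v g | v g. H10_pair v g \<and> (\<exists>x\<in>{-1..1}. v x \<noteq> 0)}"
      then obtain v g x where r: "r = rayleigh n \<gamma> v g" "H10_pair v g" "x \<in> {-1..1}" "v x \<noteq> 0"
        by auto
      show "1/16 * real n powr (2 / (1 + \<gamma>)) \<le> r"
        using lower_main[OF r(2) r(3) r(4), of \<gamma> n] ga n r(1) by simp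
    qed
  qed simp
next
  fix \<gamma> :: real assume ga: "0 < \<gamma>"
  show "\<exists>c>0. \<forall>n::nat. n \<ge> 1 \<longrightarrow> lambda_ng n \<gamma> \<le> c * real n powr (2 / (1 + \<gamma>))"
  proof (intro exI[of _ "8 + 8 * pi\<^sup>2"] conjI allI impI)
    show "0 < 8 + 8 * pi\<^sup>2" by (simp add: add_pos_nonneg)
    fix n :: nat assume n: "n \<ge> 1"
    define e where "e = real n powr (-1/(1+\<gamma>))"
    define P where "P = real n powr (2/(1+\<gamma>))"
    note EF = eps_facts[OF n ga, folded e_def P_def]
    have "lambda_ng n \<gamma> \<le> rayleigh n \<gamma> (tv e) (tg e)"
      unfolding lambda_ng_def
    proof (rule cInf_lower)
      show "rayleigh n \<gamma> (tv e) (tg e) \<in> {rayleigh n \<gamma> v g | v g. H10_pair v g \<and> (\<exists>x\<in>{-1..1}. v x \<noteq> 0)}"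
      proof -
        have "H10_pair (tv e) (tg e)" by (rule tent_H10) (use EF in auto)
        moreover have "tv e 0 \<noteq> 0" using EF by (simp add: tv_def)
        ultimately show ?thesis by force
      qed
      show "bdd_below {rayleigh n \<gamma> v g | v g. H10_pair v g \<and> (\<exists>x\<in>{-1..1}. v x \<noteq> 0)}"
        by (rule bdd_belowI[of _ 0]) (auto intro: rayleigh_nonneg)
    qed
    also have "\<dots> \<le> 8 / e\<^sup>2 + 8 * (real n * pi)\<^sup>2 * e powr (2 * \<gamma>)"
      by (rule tent_rayleigh) (use EF ga in auto)
    also have "8 / e\<^sup>2 = 8 * P"
      using EF(4) EF(1) by (simp add: field_simps)
    also have "8 * (real n * pi)\<^sup>2 * e powr (2 * \<gamma>) = 8 * (pi\<^sup>2 * P)"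
      using EF(5) by (simp add: mult.assoc)
    finally show "lambda_ng n \<gamma> \<le> (8 + 8 * pi\<^sup>2) * real n powr (2 / (1 + \<gamma>))"
      unfolding P_def by (simp add: algebra_simps)
  qed
qed

end
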